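(* Let $C$ be a set. The weight $w:\mathrm{SList}(C)\to(\mathrm{B}\overline{\mathrm{A}_\infty})^{\mathrm{op}}$ is faithful; that is, two morphisms $f,g:L\to L'$ of symmetric lists are equal if and only if $w(f)=w(g)$ in $\overline{\mathrm{A}_\infty}$.
   Context: $\mathrm{SList}(C)$ is the category presented as follows: objects are finite lists of elements of $C$; morphisms are generated by $\mathrm{sw}_{a,b,l}:a::b::l\to b::a::l$ and, for $f:l\to l'$ and $x\in C$, $x::_mf:x::l\to x::l'$; relations: $x::_m-$ is functorial, $\mathrm{sw}_{a,b,l}$ is natural in $l$, $\mathrm{sw}_{b,a,l}\circ\mathrm{sw}_{a,b,l}=\mathrm{Id}$, and $\mathrm{sw}_{b,c,a::l}\circ(b::_m\mathrm{sw}_{a,c,l})\circ\mathrm{sw}_{a,b,c::l}=(c::_m\mathrm{sw}_{a,b,l})\circ\mathrm{sw}_{a,c,b::l}\circ(a::_m\mathrm{sw}_{b,c,l})$. $\overline{\mathrm{A}_\infty}$ is the Coxeter group with generators $(s_i)_{i\in\mathbb{N}}$, relations $s_i^2=e$, $(s_is_{i+1})^3=e$, $(s_is_j)^2=e$ for $|i-j|>1$; $\mathrm{B}G$ is the one-object category with endomorphisms $G$. The weight $w$ is the functor $\mathrm{SList}(C)\to(\mathrm{B}\overline{\mathrm{A}_\infty})^{\mathrm{op}}$ determined by $w(\mathrm{sw}_{a,b,l})=s_0$ and $w(x::_mf)=\sigma(w(f))$, where $\sigma$ is the shift endomorphism $s_i\mapsto s_{i+1}$ (equivalently, induced from the free-monoid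 labelling $\mathrm{sw}\mapsto 0$, $x::_mf\mapsto 1+(\text{label of }f)$ letterwise). *)

theory Defs
  imports Main
begin

text \<open>Formal expressions built from the generators: identities, swaps
  sw_{a,b,l}, the action x ::_m f, and composition (SComp g f = g \<circ> f).\<close>

datatype 'c smor =
    SId "'c list"
  | SSw 'c 'c "'c list"
  | SCons 'c "'c smor"
  | SComp "'c smor" "'c smor"

inductive styped :: "'c smor \<Rightarrow> 'c list \<Rightarrow> 'c list \<Rightarrow> bool" where
  ty_id: "styped (SId l) l l"
| ty_sw: "styped (SSw a b l) (a # b # l) (b # a # l)"
| ty_cons: "styped f l l' \<Longrightarrow> styped (SCons x f) (x # l) (x # l')"
| ty_comp: "styped f l1 l2 \<Longrightarrow> styped g l2 l3 \<Longrightarrow> styped (SComp g f) l1 l3"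

inductive slist_eq :: "'c smor \<Rightarrow> 'c smor \<Rightarrow> bool" where
  eq_refl: "styped f l l' \<Longrightarrow> slist_eq f f"
| eq_sym: "slist_eq f g \<Longrightarrow> slist_eq g f"
| eq_trans: "slist_eq f g \<Longrightarrow> slist_eq g h \<Longrightarrow> slist_eq f h"
| eq_comp_cong: "slist_eq f f' \<Longrightarrow> slist_eq g g' \<Longrightarrow> styped f l1 l2 \<Longrightarrow> styped g l2 l3
      \<Longrightarrow> slist_eq (SComp g f) (SComp g' f')"
| eq_cons_cong: "slist_eq f f' \<Longrightarrow> slist_eq (SCons x f) (SCons x f')"
| eq_id_left: "styped f l l' \<Longrightarrow> slist_eq (SComp (SId l') f) f"
| eq_id_right: "styped f l l' \<Longrightarrow> slist_eq (SComp f (SId l)) f"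
| eq_assoc: "styped f l1 l2 \<Longrightarrow> styped g l2 l3 \<Longrightarrow> styped h l3 l4
      \<Longrightarrow> slist_eq (SComp h (SComp g f)) (SComp (SComp h g) f)"
| eq_cons_id: "slist_eq (SCons x (SId l)) (SId (x # l))"
| eq_cons_comp: "styped f l1 l2 \<Longrightarrow> styped g l2 l3
      \<Longrightarrow> slist_eq (SCons x (SComp g f)) (SComp (SCons x g) (SCons x f))"
| eq_sw_nat: "styped f l l'
      \<Longrightarrow> slist_eq (SComp (SSw a b l') (SCons a (SCons b f)))
                    (SComp (SCons b (SCons a f)) (SSw a b l))"
| eq_sw_inv: "slist_eq (SComp (SSw b a l) (SSw a b l)) (SId (a # b # l))"
| eq_yb: "slist_eq (SComp (SSw b c (a # l)) (SComp (SCons b (SSw a c l)) (SSw a b (c # l))))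
                   (SComp (SCons c (SSw a b l)) (SComp (SSw a c (b # l)) (SCons a (SSw b c l))))"

text \<open>Elements are words in the generators s_i (i :: nat); since every
  generator is an involution, the group presentation coincides with the monoid
  presentation given by the congruence below.\<close>

inductive cox_eq :: "nat list \<Rightarrow> nat list \<Rightarrow> bool" where
  cox_refl: "cox_eq u u"
| cox_sym: "cox_eq u v \<Longrightarrow> cox_eq v u"
| cox_trans: "cox_eq u v \<Longrightarrow> cox_eq v w \<Longrightarrow> cox_eq u w"
| cox_ctx: "cox_eq u v \<Longrightarrow> cox_eq (p @ u @ q) (p @ v @ q)"
| cox_sq: "cox_eq [i, i] []"
| cox_braid: "cox_eq [i, Suc i, i, Suc i, i, Suc i] []"
| cox_comm: "Suc i < j \<Longrightarrow> cox_eq [i, j, i, j] []"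
| cox_comm': "Suc j < i \<Longrightarrow> cox_eq [i, j, i, j] []"

text \<open>Composition is reversed because the target is the opposite category:
  w(g \<circ> f) = w(f) \<cdot> w(g).  The shift \<sigma> is map Suc.\<close>

fun weight :: "'c smor \<Rightarrow> nat list" where
  "weight (SId l) = []"
| "weight (SSw a b l) = [0]"
| "weight (SCons x f) = map Suc (weight f)"
| "weight (SComp g f) = weight f @ weight g"

end

theory Submission
  imports Defs
begin

fun src :: "'c smor \<Rightarrow> 'c list" where
  "src (SId l) = l"
| "src (SSw a b l) = a # b # l"
| "src (SCons x f) = x # src f"
| "src (SComp g f) = src f"

fun tgt :: "'c smor \<Rightarrow> 'c list" where
  "tgt (SId l) = l"
| "tgt (SSw a b l) = b # a # l"
| "tgt (SCons x f) = x # tgt f"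
| "tgt (SComp g f) = tgt g"

fun wt :: "'c smor \<Rightarrow> bool" where
  "wt (SId l) = True"
| "wt (SSw a b l) = True"
| "wt (SCons x f) = wt f"
| "wt (SComp g f) = (wt f \<and> wt g \<and> tgt f = src g)"

lemma styped_iff: "styped f l l' \<longleftrightarrow> wt f \<and> src f = l \<and> tgt f = l'"
proof
  assume "styped f l l'" then show "wt f \<and> src f = l \<and> tgt f = l'"
    by induction auto
next
  show "wt f \<and> src f = l \<and> tgt f = l' \<Longrightarrow> styped f l l'"
  proof (induction f arbitrary: l l')
    case (SId x) then show ?case by (auto intro: styped.intros)
  next
    case (SSw x1 x2 x3) then show ?case by (auto intro: styped.intros)
  next
    case (SCons x1 f) then show ?case by (auto intro: styped.intros)
  next
    case (SComp f1 f2) then show ?case by (auto intro: styped.intros)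
  qed
qed

lemma styped_wt: "wt f \<Longrightarrow> styped f (src f) (tgt f)"
  by (simp add: styped_iff)

lemma eq_wt: "slist_eq f g \<Longrightarrow> wt f \<and> wt g \<and> src f = src g \<and> tgt f = tgt g"
  by (induction rule: slist_eq.induct) (auto simp: styped_iff)

lemma crefl: "wt f \<Longrightarrow> slist_eq f f"
  using eq_refl styped_wt by blast

lemma ccomp: "slist_eq f f' \<Longrightarrow> slist_eq g g' \<Longrightarrow> tgt f = src g \<Longrightarrow> slist_eq (SComp g f) (SComp g' f')"
  using eq_comp_cong[of f f' g g' "src f" "tgt f" "tgt g"] eq_wt[of f f'] eq_wt[of g g']
  by (auto simp: styped_iff)

section \<open>Flattening\<close>

type_synonym 'c atom = "'c list \<times> 'c \<times> 'c \<times> 'c list"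

fun at_tm :: "'c atom \<Rightarrow> 'c smor" where
  "at_tm (p, a, b, r) = foldr SCons p (SSw a b r)"

fun pre :: "'c \<Rightarrow> 'c atom \<Rightarrow> 'c atom" where
  "pre x (p, a, b, r) = (x # p, a, b, r)"

fun at_src :: "'c atom \<Rightarrow> 'c list" where
  "at_src (p, a, b, r) = p @ a # b # r"

fun at_tgt :: "'c atom \<Rightarrow> 'c list" where
  "at_tgt (p, a, b, r) = p @ b # a # r"

fun flat :: "'c smor \<Rightarrow> 'c atom list" where
  "flat (SId l) = []"
| "flat (SSw a b l) = [([], a, b, l)]"
| "flat (SCons x f) = map (pre x) (flat f)"
| "flat (SComp g f) = flat f @ flat g"

fun rebuild :: "'c list \<Rightarrow> 'c atom list \<Rightarrow> 'c smor" where
  "rebuild l [] = SId l"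
| "rebuild l (t # ts) = SComp (rebuild (at_tgt t) ts) (at_tm t)"

fun chain :: "'c list \<Rightarrow> 'c atom list \<Rightarrow> bool" where
  "chain l [] = True"
| "chain l (t # ts) = (at_src t = l \<and> chain (at_tgt t) ts)"

fun cend :: "'c list \<Rightarrow> 'c atom list \<Rightarrow> 'c list" where
  "cend l [] = l"
| "cend l (t # ts) = cend (at_tgt t) ts"

lemma foldr_props: "wt (foldr SCons p (SSw a b r)) \<and> src (foldr SCons p (SSw a b r)) = p @ a # b # r
     \<and> tgt (foldr SCons p (SSw a b r)) = p @ b # a # r"
  by (induction p) auto

lemma at_tm_props: "wt (at_tm t) \<and> src (at_tm t) = at_src t \<and> tgt (at_tm t) = at_tgt t"
  by (cases t) (simp only: at_tm.simps at_src.simps at_tgt.simps foldr_props)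

lemma at_tm_pre: "at_tm (pre x t) = SCons x (at_tm t)"
  by (cases t) auto

lemma at_pre: "at_src (pre x t) = x # at_src t" "at_tgt (pre x t) = x # at_tgt t"
  by (cases t, auto)+

lemma chain_append: "chain l (as @ bs) \<longleftrightarrow> chain l as \<and> chain (cend l as) bs"
  by (induction as arbitrary: l) auto

lemma cend_append: "cend l (as @ bs) = cend (cend l as) bs"
  by (induction as arbitrary: l) auto

lemma chain_pre: "chain (x # l) (map (pre x) ts) \<longleftrightarrow> chain l ts"
  by (induction ts arbitrary: l) (auto simp: at_pre)

lemma cend_pre: "cend (x # l) (map (pre x) ts) = x # cend l ts"
  by (induction ts arbitrary: l) (auto simp: at_pre)

lemma rebuild_props: "chain l ts \<Longrightarrow> wt (rebuild l ts) \<and> src (rebuild l ts) = l \<and> tgt (rebuild l ts) = cend l ts"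
  by (induction ts arbitrary: l) (auto simp: at_tm_props)

lemma wt_chain: "wt f \<Longrightarrow> chain (src f) (flat f) \<and> cend (src f) (flat f) = tgt f"
  by (induction f) (auto simp: chain_append cend_append chain_pre cend_pre)

lemma cons_rebuild: "chain l ts \<Longrightarrow> slist_eq (SCons x (rebuild l ts)) (rebuild (x # l) (map (pre x) ts))"
proof (induction ts arbitrary: l)
  case Nil then show ?case by (simp add: eq_cons_id)
next
  case (Cons t ts)
  have c: "at_src t = l" "chain (at_tgt t) ts" using Cons.prems by auto
  have r: "wt (rebuild (at_tgt t) ts)" "src (rebuild (at_tgt t) ts) = at_tgt t"
    using rebuild_props[OF c(2)] by auto
  have 1: "slist_eq (SCons x (SComp (rebuild (at_tgt t) ts) (at_tm t)))
      (SComp (SCons x (rebuild (at_tgt t) ts)) (SCons x (at_tm t)))"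
    apply (rule eq_cons_comp[of _ "at_src t" "at_tgt t" _ "tgt (rebuild (at_tgt t) ts)"])
    using r at_tm_props[of t] by (auto simp: styped_iff)
  have 2: "slist_eq (SComp (SCons x (rebuild (at_tgt t) ts)) (SCons x (at_tm t)))
      (SComp (rebuild (x # at_tgt t) (map (pre x) ts)) (SCons x (at_tm t)))"
    apply (rule ccomp)
    using Cons.IH[OF c(2)] crefl[of "SCons x (at_tm t)"] at_tm_props[of t] r by auto
  show ?case using eq_trans[OF 1 2] by (simp add: at_tm_pre at_pre)
qed

lemma comp_rebuild: "chain l as \<Longrightarrow> chain (cend l as) bs \<Longrightarrow>
   slist_eq (SComp (rebuild (cend l as) bs) (rebuild l as)) (rebuild l (as @ bs))"
proof (induction as arbitrary: l)
  case Nil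
  then show ?case using eq_id_right[of "rebuild l bs" l "cend l bs"] rebuild_props[of l bs]
    by (simp add: styped_iff)
next
  case (Cons t as)
  have c: "at_src t = l" "chain (at_tgt t) as" "chain (cend (at_tgt t) as) bs" using Cons.prems by auto
  note ra = rebuild_props[OF c(2)] and rb = rebuild_props[OF c(3)]
  have 1: "slist_eq (SComp (rebuild (cend (at_tgt t) as) bs) (SComp (rebuild (at_tgt t) as) (at_tm t)))
     (SComp (SComp (rebuild (cend (at_tgt t) as) bs) (rebuild (at_tgt t) as)) (at_tm t))"
    apply (rule eq_assoc[of _ "at_src t" "at_tgt t" _ "cend (at_tgt t) as" _ "cend (cend (at_tgt t) as) bs"])
    using ra rb at_tm_props[of t] by (auto simp: styped_iff)
  have 2: "slist_eq (SComp (SComp (rebuild (cend (at_tgt t) as) bs) (rebuild (at_tgt t) as)) (at_tm t))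
      (SComp (rebuild (at_tgt t) (as @ bs)) (at_tm t))"
    apply (rule ccomp)
    using Cons.IH[OF c(2,3)] crefl[of "at_tm t"] at_tm_props[of t] ra by auto
  show ?case using eq_trans[OF 1 2] by simp
qed

lemma norm: "wt f \<Longrightarrow> slist_eq f (rebuild (src f) (flat f))"
proof (induction f)
  case (SId l) then show ?case by (simp add: crefl)
next
  case (SSw a b l)
  then show ?case using eq_sym[OF eq_id_left[of "SSw a b l" "a#b#l" "b#a#l"]]
    by (simp add: styped_iff)
next
  case (SCons x f)
  have "slist_eq (SCons x f) (SCons x (rebuild (src f) (flat f)))"
    using SCons by (simp add: eq_cons_cong)
  moreover have "slist_eq (SCons x (rebuild (src f) (flat f))) (rebuild (x # src f) (map (pre x) (flat f)))"
    using cons_rebuild wt_chain SCons.prems by fastforce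
  ultimately show ?case using eq_trans by fastforce
next
  case (SComp g f)
  have w: "wt f" "wt g" "tgt f = src g" using SComp.prems by auto
  have 1: "slist_eq (SComp g f) (SComp (rebuild (src g) (flat g)) (rebuild (src f) (flat f)))"
    using ccomp SComp.IH w by blast
  have 2: "slist_eq (SComp (rebuild (cend (src f) (flat f)) (flat g)) (rebuild (src f) (flat f)))
      (rebuild (src f) (flat f @ flat g))"
    using comp_rebuild wt_chain w by metis
  show ?case using eq_trans[OF 1] 2 w wt_chain[of f] by simp
qed

lemma flat_eq: "wt f \<Longrightarrow> wt g \<Longrightarrow> src f = src g \<Longrightarrow> flat f = flat g \<Longrightarrow> slist_eq f g"
  using norm[of f] norm[of g] eq_trans eq_sym by metis


section \<open>Insertion morphisms\<close>

fun ins :: "'c \<Rightarrow> 'c list \<Rightarrow> nat \<Rightarrow> 'c smor" where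
  "ins x m 0 = SId (x # m)"
| "ins x [] (Suc k) = SId [x]"
| "ins x (y # m) (Suc k) = SComp (SCons y (ins x m k)) (SSw x y m)"

lemma ins_props: "wt (ins x m k) \<and> src (ins x m k) = x # m \<and> tgt (ins x m k) = take k m @ x # drop k m"
  by (induction x m k rule: ins.induct) auto

lemma D:
  assumes "wt g" "src g = take k m @ x # drop k m" "k \<le> length m"
  shows "\<exists>k' m' h'. k' \<le> length m' \<and> wt h' \<and> src h' = m \<and> tgt h' = m' \<and>
     take k' m' @ x # drop k' m' = tgt g \<and>
     slist_eq (SComp g (ins x m k)) (SComp (ins x m' k') (SCons x h'))"
  using assms
proof (induction g arbitrary: x m k)
  case (SId l)
  show ?case
    apply (rule exI[of _ k], rule exI[of _ m], rule exI[of _ "SId m"])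
    using SId ins_props[of x m k] by (auto intro!: flat_eq)
next
  case (SSw a b l)
  show ?case
  proof (cases k)
    case 0
    then have e: "x = a" "m = b # l" using SSw by auto
    show ?thesis
      apply (rule exI[of _ 1], rule exI[of _ "b # l"], rule exI[of _ "SId (b # l)"])
      using e 0 by (auto intro!: flat_eq)
  next
    case (Suc j)
    then obtain c m1 where m: "m = c # m1" using SSw by (cases m) auto
    show ?thesis
    proof (cases j)
      case 0
      then have e: "c = a" "x = b" "m1 = l" using SSw Suc m by auto
      have 1: "slist_eq (SComp (SSw a b l) (ins x m k)) (SComp (SSw a b l) (SSw b a l))"
        using e m Suc 0 by (auto intro!: flat_eq)
      have 2: "slist_eq (SComp (SSw a b l) (SSw b a l)) (SId (b # a # l))"
        by (rule eq_sw_inv)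
      have 3: "slist_eq (SId (b # a # l)) (SComp (ins x m 0) (SCons x (SId m)))"
        using e m by (auto intro!: flat_eq)
      show ?thesis
        apply (rule exI[of _ 0], rule exI[of _ m], rule exI[of _ "SId m"])
        using e m Suc 0 eq_trans[OF 1 eq_trans[OF 2 3]] by auto
    next
      case (Suc i)
      then obtain d m0 where m1: "m1 = d # m0" using SSw \<open>k = Suc j\<close> m by (cases m1) auto
      have e: "c = a" "d = b" "l = take i m0 @ x # drop i m0" "i \<le> length m0"
        using SSw Suc \<open>k = Suc j\<close> m m1 by auto
      define I where "I = ins x m0 i"
      have I: "wt I" "src I = x # m0" "tgt I = l" using ins_props[of x m0 i] e by (auto simp: I_def)
      have kk: "ins x m k = SComp (SCons a (SComp (SCons b I) (SSw x b m0))) (SSw x a (b # m0))"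
        using \<open>k = Suc j\<close> Suc m m1 e by (simp add: I_def)
      have kk': "ins x (b # a # m0) k = SComp (SCons b (SComp (SCons a I) (SSw x a m0))) (SSw x b (a # m0))"
        using \<open>k = Suc j\<close> Suc by (simp add: I_def)
      define Y1 where "Y1 = SComp (SSw a b (x # m0)) (SComp (SCons a (SSw x b m0)) (SSw x a (b # m0)))"
      define Y2 where "Y2 = SComp (SCons b (SSw x a m0)) (SComp (SSw x b (a # m0)) (SCons x (SSw a b m0)))"
      have y: "slist_eq Y1 Y2" unfolding Y1_def Y2_def by (rule eq_yb)
      have 1: "slist_eq (SComp (SSw a b l) (ins x m k))
          (SComp (SComp (SSw a b l) (SCons a (SCons b I))) (SComp (SCons a (SSw x b m0)) (SSw x a (b # m0))))"
        unfolding kk using I by (auto intro!: flat_eq)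
      have 2: "slist_eq (SComp (SSw a b l) (SCons a (SCons b I))) (SComp (SCons b (SCons a I)) (SSw a b (x # m0)))"
        using eq_sw_nat[of I "x # m0" l a b] I by (simp add: styped_iff)
      have 3: "slist_eq (SComp (SComp (SSw a b l) (SCons a (SCons b I))) (SComp (SCons a (SSw x b m0)) (SSw x a (b # m0))))
         (SComp (SComp (SCons b (SCons a I)) (SSw a b (x # m0))) (SComp (SCons a (SSw x b m0)) (SSw x a (b # m0))))"
        apply (rule ccomp[OF _ 2]) using I by (auto intro!: crefl)
      have 4: "slist_eq (SComp (SComp (SCons b (SCons a I)) (SSw a b (x # m0))) (SComp (SCons a (SSw x b m0)) (SSw x a (b # m0))))
         (SComp (SCons b (SCons a I)) Y1)"
        unfolding Y1_def using I by (auto intro!: flat_eq)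
      have 5: "slist_eq (SComp (SCons b (SCons a I)) Y1) (SComp (SCons b (SCons a I)) Y2)"
        apply (rule ccomp[OF y]) using I by (auto intro!: crefl simp: Y1_def)
      have 6: "slist_eq (SComp (SCons b (SCons a I)) Y2) (SComp (ins x (b # a # m0) k) (SCons x (SSw a b m0)))"
        unfolding kk' Y2_def using I by (auto intro!: flat_eq)
      show ?thesis
        apply (rule exI[of _ k], rule exI[of _ "b # a # m0"], rule exI[of _ "SSw a b m0"])
        using eq_trans[OF 1 eq_trans[OF 3 eq_trans[OF 4 eq_trans[OF 5 6]]]] \<open>k = Suc j\<close> Suc e m m1
        by auto
    qed
  qed
next
  case (SCons y g1)
  show ?case
  proof (cases k)
    case 0
    then have e: "x = y" "m = src g1" using SCons by auto
    show ?thesis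
      apply (rule exI[of _ 0], rule exI[of _ "tgt g1"], rule exI[of _ g1])
      using e 0 SCons by (auto intro!: flat_eq)
  next
    case (Suc j)
    then obtain c m1 where m: "m = c # m1" using SCons by (cases m) auto
    have e: "c = y" "src g1 = take j m1 @ x # drop j m1" "j \<le> length m1" "wt g1"
      using SCons Suc m by auto
    obtain k1 m1' h1 where h: "k1 \<le> length m1'" "wt h1" "src h1 = m1" "tgt h1 = m1'"
      "take k1 m1' @ x # drop k1 m1' = tgt g1"
      and q: "slist_eq (SComp g1 (ins x m1 j)) (SComp (ins x m1' k1) (SCons x h1))"
      using SCons.IH[OF e(4,2,3)] by blast
    note i1 = ins_props[of x m1 j] and i2 = ins_props[of x m1' k1]
    have 1: "slist_eq (SComp (SCons y g1) (ins x m k)) (SComp (SCons y (SComp g1 (ins x m1 j))) (SSw x y m1))"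
      using Suc m e i1 by (auto intro!: flat_eq)
    have 2: "slist_eq (SComp (SCons y (SComp g1 (ins x m1 j))) (SSw x y m1))
       (SComp (SCons y (SComp (ins x m1' k1) (SCons x h1))) (SSw x y m1))"
      apply (rule ccomp) using q e i1 by (auto intro!: crefl eq_cons_cong)
    have 3: "slist_eq (SComp (SCons y (SComp (ins x m1' k1) (SCons x h1))) (SSw x y m1))
        (SComp (SCons y (ins x m1' k1)) (SComp (SCons y (SCons x h1)) (SSw x y m1)))"
      using h i2 by (auto intro!: flat_eq)
    have 4: "slist_eq (SComp (SCons y (SCons x h1)) (SSw x y m1)) (SComp (SSw x y m1') (SCons x (SCons y h1)))"
      using eq_sym[OF eq_sw_nat[of h1 m1 m1' x y]] h by (simp add: styped_iff)
    have 5: "slist_eq (SComp (SCons y (ins x m1' k1)) (SComp (SCons y (SCons x h1)) (SSw x y m1)))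
        (SComp (SCons y (ins x m1' k1)) (SComp (SSw x y m1') (SCons x (SCons y h1))))"
      apply (rule ccomp[OF 4]) using h i2 by (auto intro!: crefl)
    have 6: "slist_eq (SComp (SCons y (ins x m1' k1)) (SComp (SSw x y m1') (SCons x (SCons y h1))))
         (SComp (ins x (y # m1') (Suc k1)) (SCons x (SCons y h1)))"
      using h i2 by (auto intro!: flat_eq)
    show ?thesis
      apply (rule exI[of _ "Suc k1"], rule exI[of _ "y # m1'"], rule exI[of _ "SCons y h1"])
      using eq_trans[OF 1 eq_trans[OF 2 eq_trans[OF 3 eq_trans[OF 5 6]]]] h m e by auto
  qed
next
  case (SComp g2 g1)
  have w: "wt g1" "wt g2" "tgt g1 = src g2" "src g1 = take k m @ x # drop k m" using SComp.prems by auto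
  obtain k1 m1 h1 where h1: "k1 \<le> length m1" "wt h1" "src h1 = m" "tgt h1 = m1"
      "take k1 m1 @ x # drop k1 m1 = tgt g1"
      and q1: "slist_eq (SComp g1 (ins x m k)) (SComp (ins x m1 k1) (SCons x h1))"
    using SComp.IH(2)[OF w(1,4) SComp.prems(3)] by blast
  obtain k2 m2 h2 where h2: "k2 \<le> length m2" "wt h2" "src h2 = m1" "tgt h2 = m2"
      "take k2 m2 @ x # drop k2 m2 = tgt g2"
      and q2: "slist_eq (SComp g2 (ins x m1 k1)) (SComp (ins x m2 k2) (SCons x h2))"
    using SComp.IH(1)[OF w(2) _ h1(1)] h1(5) w(3) by metis
  note i0 = ins_props[of x m k] and i1 = ins_props[of x m1 k1] and i2 = ins_props[of x m2 k2]
  have 1: "slist_eq (SComp (SComp g2 g1) (ins x m k)) (SComp g2 (SComp g1 (ins x m k)))"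
    using w i0 by (auto intro!: flat_eq)
  have 2: "slist_eq (SComp g2 (SComp g1 (ins x m k))) (SComp g2 (SComp (ins x m1 k1) (SCons x h1)))"
    apply (rule ccomp[OF q1]) using w i0 by (auto intro!: crefl)
  have 3: "slist_eq (SComp g2 (SComp (ins x m1 k1) (SCons x h1))) (SComp (SComp g2 (ins x m1 k1)) (SCons x h1))"
    using w i1 h1 by (auto intro!: flat_eq)
  have 4: "slist_eq (SComp (SComp g2 (ins x m1 k1)) (SCons x h1)) (SComp (SComp (ins x m2 k2) (SCons x h2)) (SCons x h1))"
    apply (rule ccomp[OF _ q2]) using h1 i1 by (auto intro!: crefl)
  have 5: "slist_eq (SComp (SComp (ins x m2 k2) (SCons x h2)) (SCons x h1)) (SComp (ins x m2 k2) (SCons x (SComp h2 h1)))"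
    using h1 h2 i2 by (auto intro!: flat_eq)
  show ?case
    apply (rule exI[of _ k2], rule exI[of _ m2], rule exI[of _ "SComp h2 h1"])
    using eq_trans[OF 1 eq_trans[OF 2 eq_trans[OF 3 eq_trans[OF 4 5]]]] h1 h2 by auto
qed

section \<open>Coxeter words\<close>

lemma cox_app: "cox_eq u u' \<Longrightarrow> cox_eq v v' \<Longrightarrow> cox_eq (u @ v) (u' @ v')"
proof -
  assume a: "cox_eq u u'" "cox_eq v v'"
  have "cox_eq ([] @ u @ v) ([] @ u' @ v)" using cox_ctx[OF a(1)] by blast
  moreover have "cox_eq (u' @ v @ []) (u' @ v' @ [])" using cox_ctx[OF a(2)] by blast
  ultimately show ?thesis using cox_trans by fastforce
qed

lemma cox_map_Suc: "cox_eq u v \<Longrightarrow> cox_eq (map Suc u) (map Suc v)"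
proof (induction rule: cox_eq.induct)
  case (cox_ctx u v p q) then show ?case using cox_eq.cox_ctx by fastforce
next
  case (cox_comm i j) then show ?case using cox_eq.cox_comm[of "Suc i" "Suc j"] by simp
next
  case (cox_comm' j i) then show ?case using cox_eq.cox_comm'[of "Suc j" "Suc i"] by simp
qed (auto intro: cox_eq.intros)

lemma cox_rev_cancel: "cox_eq (rev v @ v) []"
proof (induction v)
  case Nil then show ?case by (simp add: cox_refl)
next
  case (Cons i v)
  have "cox_eq (rev v @ [i, i] @ v) (rev v @ [] @ v)" by (rule cox_ctx[OF cox_sq])
  then show ?case using Cons cox_trans by fastforce
qed

lemma cox_by_inv: "cox_eq (u @ rev v) [] \<Longrightarrow> cox_eq u v"
proof -
  assume a: "cox_eq (u @ rev v) []"
  have "cox_eq ([] @ (u @ rev v) @ v) ([] @ [] @ v)" by (rule cox_ctx[OF a])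
  then have 1: "cox_eq (u @ rev v @ v) v" by simp
  have "cox_eq (u @ (rev v @ v) @ []) (u @ [] @ [])" by (rule cox_ctx[OF cox_rev_cancel])
  then have "cox_eq (u @ rev v @ v) u" by simp
  then show ?thesis using 1 cox_sym cox_trans by blast
qed

lemma cox_comm0: "2 \<le> j \<Longrightarrow> cox_eq [j, 0] [0, j]"
  by (rule cox_by_inv) (simp add: cox_comm')

lemma cox_pass0: "\<forall>j\<in>set w. 2 \<le> j \<Longrightarrow> cox_eq (w @ [0]) ([0] @ w)"
proof (induction w)
  case Nil then show ?case by (simp add: cox_refl)
next
  case (Cons j w)
  have 1: "cox_eq ([j] @ (w @ [0]) @ []) ([j] @ ([0] @ w) @ [])"
    by (rule cox_ctx) (use Cons in auto)
  have 2: "cox_eq ([] @ [j, 0] @ w) ([] @ [0, j] @ w)"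
    by (rule cox_ctx[OF cox_comm0]) (use Cons in auto)
  have c1: "cox_eq ((j # w) @ [0]) ([j, 0] @ w)" using 1 by simp
  have c2: "cox_eq ([j, 0] @ w) ([0] @ j # w)" using 2 by simp
  show ?case using cox_trans[OF c1 c2] .
qed

lemma forward: "slist_eq f g \<Longrightarrow> cox_eq (weight f) (weight g)"
proof (induction rule: slist_eq.induct)
  case (eq_sw_nat f l l' a b)
  show ?case using cox_pass0[of "map Suc (map Suc (weight f))"] by auto
next
  case (eq_sw_inv b a l) show ?case using cox_sq[of 0] by simp
next
  case (eq_yb b c a l)
  show ?case by simp (rule cox_by_inv, simp add: cox_braid[of 0, simplified])
qed (auto intro: cox_eq.intros cox_app cox_map_Suc)

section \<open>Permutation semantics\<close>

definition tr :: "nat \<Rightarrow> nat \<Rightarrow> nat" where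
  "tr i k = (if k = i then Suc i else if k = Suc i then i else k)"

fun pw :: "nat list \<Rightarrow> nat \<Rightarrow> nat" where
  "pw [] = id"
| "pw (i # w) = pw w \<circ> tr i"

lemma pw_append: "pw (u @ v) = pw v \<circ> pw u"
  by (induction u) auto

definition shift :: "(nat \<Rightarrow> nat) \<Rightarrow> nat \<Rightarrow> nat" where
  "shift s k = (case k of 0 \<Rightarrow> 0 | Suc q \<Rightarrow> Suc (s q))"

lemma pw_map_Suc: "pw (map Suc w) = shift (pw w)"
proof (induction w)
  case Nil then show ?case by (auto simp: shift_def fun_eq_iff split: nat.split)
next
  case (Cons i w)
  then show ?case by (auto simp: shift_def fun_eq_iff tr_def split: nat.split)
qed

lemma cox_pw: "cox_eq u v \<Longrightarrow> pw u = pw v"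
proof (induction rule: cox_eq.induct)
  case (cox_ctx u v p q) then show ?case by (simp add: pw_append)
next
  case (cox_sq i) then show ?case by (auto simp: fun_eq_iff tr_def)
next
  case (cox_braid i) then show ?case by (auto simp: fun_eq_iff tr_def)
next
  case (cox_comm i j) then show ?case by (auto simp: fun_eq_iff tr_def)
next
  case (cox_comm' i j) then show ?case by (auto simp: fun_eq_iff tr_def)
qed auto

lemma inj_pw: "inj (pw w)"
proof (induction w)
  case Nil then show ?case by simp
next
  case (Cons i w)
  have "inj (tr i)" unfolding inj_def tr_def by auto
  then show ?case using Cons inj_compose[of "pw w" "tr i"] by (metis pw.simps(2))
qed

lemma pw_ins0: "k \<le> length m \<Longrightarrow> pw (weight (ins x m k)) 0 = k"
proof (induction x m k rule: ins.induct)
  case (3 x y m k)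
  then show ?case by (simp add: pw_append pw_map_Suc shift_def tr_def)
qed auto

lemma take_drop_inj: "k \<le> length m \<Longrightarrow> k \<le> length m' \<Longrightarrow>
   take k m @ x # drop k m = take k m' @ x # drop k m' \<Longrightarrow> m = m'"
proof -
  assume a: "k \<le> length m" "k \<le> length m'" "take k m @ x # drop k m = take k m' @ x # drop k m'"
  then have "take k m = take k m' \<and> x # drop k m = x # drop k m'"
    by (subst (asm) append_eq_append_conv) auto
  then show ?thesis by (metis append_take_drop_id list.inject)
qed

lemma wt_src_nil: "wt f \<Longrightarrow> length (tgt f) = length (src f) \<and> (flat f \<noteq> [] \<longrightarrow> 2 \<le> length (src f))"
  by (induction f) auto

lemma main: "src f = L \<Longrightarrow> wt f \<Longrightarrow> wt g \<Longrightarrow> src g = L \<Longrightarrow> tgt f = tgt g \<Longrightarrow>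
    pw (weight f) = pw (weight g) \<Longrightarrow> slist_eq f g"
proof (induction L arbitrary: f g)
  case Nil
  then have "flat f = []" "flat g = []" using wt_src_nil by fastforce+
  then show ?case using Nil by (auto intro!: flat_eq)
next
  case (Cons x l)
  have dec: "\<exists>k m h. k \<le> length m \<and> wt h \<and> src h = l \<and> tgt h = m \<and> take k m @ x # drop k m = tgt f' \<and>
     slist_eq f' (SComp (ins x m k) (SCons x h))" if w1: "wt f'" and s1: "src f' = x # l" for f'
  proof -
    obtain k m h where h: "k \<le> length m" "wt h" "src h = l" "tgt h = m" "take k m @ x # drop k m = tgt f'"
      and q: "slist_eq (SComp f' (ins x l 0)) (SComp (ins x m k) (SCons x h))"
    proof -
      have "\<exists>k m h. k \<le> length m \<and> wt h \<and> src h = l \<and> tgt h = m \<and> take k m @ x # drop k m = tgt f' \<and>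
         slist_eq (SComp f' (ins x l 0)) (SComp (ins x m k) (SCons x h))"
        using D[of f' 0 l x] w1 s1 by simp
      then show ?thesis using that by blast
    qed
    have "slist_eq f' (SComp f' (ins x l 0))" using that by (auto intro!: flat_eq)
    then show ?thesis using h q eq_trans by blast
  qed
  obtain k m h where h: "k \<le> length m" "wt h" "src h = l" "tgt h = m" "take k m @ x # drop k m = tgt f"
     and qf: "slist_eq f (SComp (ins x m k) (SCons x h))" using dec Cons.prems by blast
  obtain k2 m2 h2 where h2: "k2 \<le> length m2" "wt h2" "src h2 = l" "tgt h2 = m2" "take k2 m2 @ x # drop k2 m2 = tgt g"
     and qg: "slist_eq g (SComp (ins x m2 k2) (SCons x h2))" using dec Cons.prems by blast
  have pf: "pw (weight f) = pw (weight (ins x m k)) \<circ> shift (pw (weight h))"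
    using cox_pw[OF forward[OF qf]] by (simp add: pw_append pw_map_Suc)
  have pg: "pw (weight g) = pw (weight (ins x m2 k2)) \<circ> shift (pw (weight h2))"
    using cox_pw[OF forward[OF qg]] by (simp add: pw_append pw_map_Suc)
  have eqp: "pw (weight (ins x m k)) \<circ> shift (pw (weight h)) = pw (weight (ins x m2 k2)) \<circ> shift (pw (weight h2))"
    using pf pg Cons.prems by metis
  from fun_cong[OF eqp, of 0] have "k = k2" using pw_ins0[OF h(1)] pw_ins0[OF h2(1)] by (simp add: shift_def)
  then have "m = m2" using take_drop_inj h h2 Cons.prems by metis
  have "shift (pw (weight h)) = shift (pw (weight h2))"
  proof (rule ext)
    fix p
    have "pw (weight (ins x m k)) (shift (pw (weight h)) p) = pw (weight (ins x m k)) (shift (pw (weight h2)) p)"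
      using fun_cong[OF eqp, of p] \<open>k = k2\<close> \<open>m = m2\<close> by simp
    then show "shift (pw (weight h)) p = shift (pw (weight h2)) p"
      using inj_pw[of "weight (ins x m k)"] by (simp add: inj_eq)
  qed
  note sh = this
  have "pw (weight h) = pw (weight h2)"
  proof (rule ext)
    fix p
    show "pw (weight h) p = pw (weight h2) p" using fun_cong[OF sh, of "Suc p"] by (simp add: shift_def)
  qed
  then have hh: "slist_eq h h2" using Cons.IH[of h h2] h h2 \<open>m = m2\<close> by simp
  have hc: "slist_eq (SCons x h) (SCons x h2)" using hh by (rule eq_cons_cong)
  have ir: "slist_eq (ins x m k) (ins x m2 k2)" using crefl[of "ins x m k"] ins_props[of x m k] \<open>k = k2\<close> \<open>m = m2\<close> by simp
  have "slist_eq (SComp (ins x m k) (SCons x h)) (SComp (ins x m2 k2) (SCons x h2))"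
    by (rule ccomp[OF hc ir]) (simp add: h ins_props)
  then show ?case using eq_trans[OF qf] eq_sym[OF qg] eq_trans by blast
qed

theorem theorem2p8:
  fixes f g :: "'c smor" and L L' :: "'c list"
  assumes "styped f L L'" and "styped g L L'"
  shows "slist_eq f g \<longleftrightarrow> cox_eq (weight f) (weight g)"
proof
  assume "slist_eq f g" then show "cox_eq (weight f) (weight g)" by (rule forward)
next
  assume "cox_eq (weight f) (weight g)"
  then have "pw (weight f) = pw (weight g)" by (rule cox_pw)
  then show "slist_eq f g" using main[of f L g] assms by (simp add: styped_iff)
qed

end
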